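(* Let $D=(0,1)\subseteq\mathbb{R}$ and let $\nu$ be a probability measure on $D$ with density $\rho:D\to[0,\infty)$. Assume that there are only $N$ points $x_1,\dots,x_N\in D$ satisfying $\rho(x_i)=0$, and that for each $i$, $$\underline{C_i}\,|x_i-x|^{k_i}\le\rho(x)\le\overline{C_i}\,|x_i-x|^{k_i}\quad\text{for all }x\in B_i,$$ where $B_i=(x_i-\Delta_i,x_i+\Delta_i)$ is a small neighborhood of $x_i$ and $\Delta_i,k_i,\overline{C_i},\underline{C_i}$ are positive numbers with $k_i\in\mathbb{Z}$. Let $X_1,\dots,X_n,\dots$ be i.i.d. random variables sampled from $\nu$ and let $\nu_n=\frac1n\sum_{i=1}^n\delta_{X_i}$. Then there exists a positive constant $C$, independent of $n$ (depending on $k_i,\underline{C_i}$ and the data of $\nu$), such that, except on a set with probability $O\big(\frac1{\log n}\big)$, $$W_\infty(\nu,\nu_n)\le C\max_i\Big(\frac{\log n}{n}\Big)^{\frac{1}{2(k_i+1)}}.$$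
   Context: For probability measures $\mu,\nu$ on $D$, the $\infty$-Wasserstein distance is $W_\infty(\mu,\nu)=\inf_{\pi\in\Pi(\mu,\nu)}\operatorname{ess\,sup}_{\pi}|x-y|$, where $\Pi(\mu,\nu)$ is the set of all probability measures on $D\times D$ with first marginal $\mu$ and second marginal $\nu$ (couplings), and the essential supremum is taken with respect to $\pi$. *)

theory Defs
  imports "HOL-Probability.Probability"
begin

definition couplings :: "real measure \<Rightarrow> real measure \<Rightarrow> (real \<times> real) measure set" where
  "couplings \<mu> \<nu> = {\<pi>. sets \<pi> = sets (borel \<Otimes>\<^sub>M borel) \<and> prob_space \<pi> \<and>
      distr \<pi> borel fst = \<mu> \<and> distr \<pi> borel snd = \<nu>}"

definition W_inf :: "real measure \<Rightarrow> real measure \<Rightarrow> ereal" where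
  "W_inf \<mu> \<nu> = (INF \<pi>\<in>couplings \<mu> \<nu>. esssup \<pi> (\<lambda>p. ereal (dist (fst p) (snd p))))"

definition empirical :: "(nat \<Rightarrow> 'a \<Rightarrow> real) \<Rightarrow> nat \<Rightarrow> 'a \<Rightarrow> real measure" where
  "empirical X n w = distr (measure_pmf (pmf_of_set {1..n})) borel (\<lambda>i. X i w)"

definition dens_measure :: "(real \<Rightarrow> real) \<Rightarrow> real measure" where
  "dens_measure \<rho> = density lborel (\<lambda>x. indicator {0<..<1} x * ennreal (\<rho> x))"

end

theory Submission
  imports Defs
begin

lemma W_inf_cdf_bound:
  fixes \<mu>1 \<mu>2 :: "real measure" and h :: real
  assumes d1: "real_distribution \<mu>1" and d2: "real_distribution \<mu>2"
    and c1: "\<And>y. cdf \<mu>1 y \<le> cdf \<mu>2 (y + h)"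
    and c2: "\<And>y. cdf \<mu>2 y \<le> cdf \<mu>1 (y + h)"
  shows "W_inf \<mu>1 \<mu>2 \<le> ereal h"
proof -
  interpret A: cdf_distribution \<mu>1 using d1 by (simp add: cdf_distribution_def)
  interpret B: cdf_distribution \<mu>2 using d2 by (simp add: cdf_distribution_def)
  define \<Omega> where "\<Omega> = restrict_space lborel {0<..<1::real}"
  interpret \<Omega>: prob_space \<Omega>
    by (auto simp add: \<Omega>_def emeasure_restrict_space space_restrict_space intro!: prob_spaceI)
  define I1 where "I1 = (\<lambda>\<omega>::real. Inf {x. \<omega> \<le> cdf \<mu>1 x})"
  define I2 where "I2 = (\<lambda>\<omega>::real. Inf {x. \<omega> \<le> cdf \<mu>2 x})"
  have m1: "I1 \<in> borel_measurable \<Omega>"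
  proof -
    have ss: "sets (restrict_space lborel {0<..<1::real}) = sets (restrict_space borel {0<..<1::real})"
      by (rule sets_restrict_space_cong) simp
    show ?thesis unfolding I1_def \<Omega>_def
      using A.measurable_CI by (subst measurable_cong_sets[OF ss refl])
  qed
  have m2: "I2 \<in> borel_measurable \<Omega>"
  proof -
    have ss: "sets (restrict_space lborel {0<..<1::real}) = sets (restrict_space borel {0<..<1::real})"
      by (rule sets_restrict_space_cong) simp
    show ?thesis unfolding I2_def \<Omega>_def
      using B.measurable_CI by (subst measurable_cong_sets[OF ss refl])
  qed
  have e1: "distr \<Omega> borel I1 = \<mu>1" unfolding \<Omega>_def I1_def by (rule A.distr_I_eq_M)
  have e2: "distr \<Omega> borel I2 = \<mu>2" unfolding \<Omega>_def I2_def by (rule B.distr_I_eq_M)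
  define \<pi> where "\<pi> = distr \<Omega> (borel \<Otimes>\<^sub>M borel) (\<lambda>\<omega>. (I1 \<omega>, I2 \<omega>))"
  have mp: "(\<lambda>\<omega>. (I1 \<omega>, I2 \<omega>)) \<in> measurable \<Omega> (borel \<Otimes>\<^sub>M borel)"
    using m1 m2 by measurable
  have pic: "\<pi> \<in> couplings \<mu>1 \<mu>2"
    unfolding couplings_def
  proof (intro CollectI conjI)
    show "sets \<pi> = sets (borel \<Otimes>\<^sub>M borel)" by (simp add: \<pi>_def)
    show "prob_space \<pi>" unfolding \<pi>_def by (rule \<Omega>.prob_space_distr[OF mp])
    show "distr \<pi> borel fst = \<mu>1"
      unfolding \<pi>_def using e1 mp by (subst distr_distr) (auto simp: comp_def)
    show "distr \<pi> borel snd = \<mu>2"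
      unfolding \<pi>_def using e2 mp by (subst distr_distr) (auto simp: comp_def)
  qed
  have key: "\<bar>I1 \<omega> - I2 \<omega>\<bar> \<le> h" if "\<omega> \<in> {0<..<1}" for \<omega>
  proof -
    have p1: "\<omega> \<le> cdf \<mu>1 x \<longleftrightarrow> I1 \<omega> \<le> x" for x unfolding I1_def
      using A.pseudoinverse[of \<omega> x] that by simp
    have p2: "\<omega> \<le> cdf \<mu>2 x \<longleftrightarrow> I2 \<omega> \<le> x" for x unfolding I2_def
      using B.pseudoinverse[of \<omega> x] that by simp
    have "\<omega> \<le> cdf \<mu>1 (I1 \<omega>)" using p1 by simp
    then have "\<omega> \<le> cdf \<mu>2 (I1 \<omega> + h)" using c1[of "I1 \<omega>"] by linarith
    then have a: "I2 \<omega> \<le> I1 \<omega> + h" using p2 by simp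
    have "\<omega> \<le> cdf \<mu>2 (I2 \<omega>)" using p2 by simp
    then have "\<omega> \<le> cdf \<mu>1 (I2 \<omega> + h)" using c2[of "I2 \<omega>"] by linarith
    then have b: "I1 \<omega> \<le> I2 \<omega> + h" using p1 by simp
    show ?thesis using a b by linarith
  qed
  have "esssup \<pi> (\<lambda>p. ereal (dist (fst p) (snd p))) \<le> ereal h"
  proof (rule esssup_I)
    show "(\<lambda>p. ereal (dist (fst p) (snd p))) \<in> borel_measurable \<pi>"
      by (simp add: \<pi>_def)
    have ae: "AE x in \<Omega>. ereal (dist (fst (I1 x, I2 x)) (snd (I1 x, I2 x))) \<le> ereal h"
      by (rule AE_I2) (use key in \<open>auto simp: \<Omega>_def space_restrict_space dist_real_def\<close>)
    have pr: "{x::real\<times>real. x \<in> space (borel \<Otimes>\<^sub>M borel) \<and> ereal (dist (fst x) (snd x)) \<le> ereal h} \<in> sets (borel \<Otimes>\<^sub>M borel)"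
      by measurable
    show "AE x in \<pi>. ereal (dist (fst x) (snd x)) \<le> ereal h"
      unfolding \<pi>_def using AE_distr_iff[OF mp pr] ae by simp
  qed
  moreover have "W_inf \<mu>1 \<mu>2 \<le> esssup \<pi> (\<lambda>p. ereal (dist (fst p) (snd p)))"
    unfolding W_inf_def using pic by (rule INF_lower)
  ultimately show ?thesis by simp
qed

locale cor_setting =
  fixes \<rho> :: "real \<Rightarrow> real" and N :: nat
    and xs \<Delta> Cl Cu :: "nat \<Rightarrow> real" and k :: "nat \<Rightarrow> int"
    and lam :: real
  assumes rho_meas: "\<rho> \<in> borel_measurable borel"
    and rho_nonneg: "\<And>x. x \<in> {0<..<1} \<Longrightarrow> \<rho> x \<ge> 0"
    and rho_prob: "(\<integral>\<^sup>+ x \<in> {0<..<1}. ennreal (\<rho> x) \<partial>lborel) = 1"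
    and N_pos: "N \<ge> 1"
    and params: "\<And>i. i < N \<Longrightarrow> \<Delta> i > 0 \<and> k i > 0 \<and> Cl i > 0 \<and> Cu i > 0"
    and local_bounds: "\<And>i x. i < N \<Longrightarrow> x \<in> {0<..<1} \<Longrightarrow> x \<in> {xs i - \<Delta> i <..< xs i + \<Delta> i} \<Longrightarrow>
          Cl i * \<bar>xs i - x\<bar> powi k i \<le> \<rho> x \<and> \<rho> x \<le> Cu i * \<bar>xs i - x\<bar> powi k i"
    and lower_away: "lam > 0"
    and lower_bound: "\<And>x. x \<in> {0<..<1} \<Longrightarrow> (\<forall>i<N. x \<notin> {xs i - \<Delta> i <..< xs i + \<Delta> i}) \<Longrightarrow> \<rho> x \<ge> lam"
begin

definition "KK = Max ((\<lambda>i. nat (k i)) ` {..<N})"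
definition "c0 = min lam (Min (Cl ` {..<N}))"
definition "cc = c0 / (2 * (4 * real N) ^ KK)"

lemma ne: "{..<N} \<noteq> {}" using N_pos by (simp add: lessThan_empty_iff)

lemma c0pos: "c0 > 0" unfolding c0_def using lower_away params ne by (auto simp: Min_gr_iff)

lemma ccpos: "cc > 0" unfolding cc_def using c0pos N_pos by simp

lemma KK_attained: "\<exists>i<N. nat (k i) = KK"
proof -
  have "KK \<in> (\<lambda>i. nat (k i)) ` {..<N}" unfolding KK_def using ne by (intro Max_in) auto
  then show ?thesis by auto
qed

lemma rho_pointwise:
  assumes x: "x \<in> {0<..<1}" and r: "0 < r" "r \<le> 1" and far: "\<And>i. i < N \<Longrightarrow> \<bar>x - xs i\<bar> \<ge> r"
  shows "\<rho> x \<ge> c0 * r ^ KK"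
proof -
  have rK: "r ^ KK \<le> 1" using r by (simp add: power_le_one)
  show ?thesis
  proof (cases "\<exists>i<N. x \<in> {xs i - \<Delta> i <..< xs i + \<Delta> i}")
    case True
    then obtain i where i: "i < N" "x \<in> {xs i - \<Delta> i <..< xs i + \<Delta> i}" by blast
    have lb: "Cl i * \<bar>xs i - x\<bar> powi k i \<le> \<rho> x" using local_bounds[OF i(1) x i(2)] by simp
    have kpos: "k i > 0" using params[OF i(1)] by simp
    have pw: "\<bar>xs i - x\<bar> powi k i = \<bar>xs i - x\<bar> ^ nat (k i)"
      using kpos by (simp add: power_int_def)
    have ki: "nat (k i) \<le> KK" unfolding KK_def using i(1) by (intro Max_ge) auto
    have "r ^ KK \<le> r ^ nat (k i)" using r ki by (simp add: power_decreasing)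
    also have "\<dots> \<le> \<bar>xs i - x\<bar> ^ nat (k i)"
      using far[OF i(1)] r by (intro power_mono) auto
    finally have A: "r ^ KK \<le> \<bar>xs i - x\<bar> powi k i" using pw by simp
    have clc: "c0 \<le> Cl i" unfolding c0_def using i(1) by (auto intro: min.coboundedI2 Min_le)
    have "c0 * r ^ KK \<le> Cl i * \<bar>xs i - x\<bar> powi k i"
      using A clc c0pos r by (intro mult_mono) auto
    then show ?thesis using lb by linarith
  next
    case False
    then have "\<rho> x \<ge> lam" using lower_bound[OF x] by blast
    moreover have "c0 * r ^ KK \<le> lam"
    proof -
      have "c0 * r ^ KK \<le> c0" using rK c0pos by (simp add: mult_left_le)
      also have "\<dots> \<le> lam" unfolding c0_def by simp
      finally show ?thesis .
    qed
    ultimately show ?thesis by linarith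
  qed
qed

abbreviation "\<nu> \<equiv> dens_measure \<rho>"

lemma sets_nu[simp]: "sets \<nu> = sets borel"
  by (simp add: dens_measure_def)

lemma space_nu[simp]: "space \<nu> = UNIV"
  by (simp add: dens_measure_def)

lemma emeasure_nu: "S \<in> sets borel \<Longrightarrow> emeasure \<nu> S = (\<integral>\<^sup>+ x. indicator {0<..<1} x * ennreal (\<rho> x) * indicator S x \<partial>lborel)"
  unfolding dens_measure_def using rho_meas
  by (subst emeasure_density) (auto simp: nn_integral_set_ennreal)

lemma nu_prob: "prob_space \<nu>"
proof (rule prob_spaceI)
  have "emeasure \<nu> UNIV = (\<integral>\<^sup>+ x. indicator {0<..<1} x * ennreal (\<rho> x) \<partial>lborel)"
    by (subst emeasure_nu) auto
  also have "\<dots> = 1" using rho_prob by (simp add: mult.commute)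
  finally show "emeasure \<nu> (space \<nu>) = 1" by simp
qed

lemma nu_real_distr: "real_distribution \<nu>"
  unfolding real_distribution_def real_distribution_axioms_def using nu_prob by simp

lemma mass:
  assumes a: "0 \<le> a" and L: "0 < L" and aL: "a + L \<le> 1"
  shows "measure \<nu> {a<..a+L} \<ge> cc * L ^ (KK + 1)"
proof -
  define r where "r = L / (4 * real N)"
  have Npos: "real N > 0" using N_pos by simp
  have r0: "r > 0" unfolding r_def using L Npos by simp
  have r1: "r \<le> 1" unfolding r_def using L a aL Npos by (simp add: field_simps)
  define U where "U = (\<Union>i<N. {xs i - r <..< xs i + r})"
  define T where "T = {a<..<a+L} - U"
  have Tm: "T \<in> sets borel" unfolding T_def U_def by auto
  have Tsub: "T \<subseteq> {a<..a+L}" unfolding T_def by auto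
  have pt: "\<rho> x \<ge> c0 * r ^ KK" if "x \<in> T" for x
  proof (rule rho_pointwise)
    show "x \<in> {0<..<1}" using that a aL unfolding T_def by auto
    show "r \<le> \<bar>x - xs i\<bar>" if "i < N" for i
    proof -
      have "x \<notin> {xs i - r <..< xs i + r}" using \<open>x \<in> T\<close> that unfolding T_def U_def by auto
      then show ?thesis by (auto simp: abs_if)
    qed
  qed (use r0 r1 in auto)
  have T01: "T \<subseteq> {0<..<1}" unfolding T_def using a aL by auto
  have mU: "emeasure lborel U \<le> ennreal (L / 2)"
  proof -
    have "emeasure lborel U \<le> (\<Sum>i<N. emeasure lborel {xs i - r <..< xs i + r})"
      unfolding U_def by (intro emeasure_subadditive_finite) auto
    also have "\<dots> = (\<Sum>i<N. ennreal (2 * r))"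
      using r0 by (intro sum.cong) (auto simp: emeasure_lborel_Ioo)
    also have "\<dots> = ennreal (real N * (2 * r))"
      using r0 by (simp add: ennreal_of_nat_eq_real_of_nat ennreal_mult)
    also have "real N * (2 * r) = L / 2" unfolding r_def using Npos by (simp add: field_simps)
    finally show ?thesis .
  qed
  have mT: "ennreal (L / 2) \<le> emeasure lborel T"
  proof -
    have "ennreal L = emeasure lborel {a<..<a+L}" using L by (simp add: emeasure_lborel_Ioo)
    also have "\<dots> \<le> emeasure lborel (T \<union> U)" unfolding T_def U_def by (intro emeasure_mono) auto
    also have "\<dots> \<le> emeasure lborel T + emeasure lborel U"
      by (intro emeasure_subadditive) (auto simp: T_def U_def)
    also have "\<dots> \<le> emeasure lborel T + ennreal (L / 2)" using mU by (simp add: add_left_mono)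
    finally have "ennreal (L/2) + ennreal (L/2) \<le> emeasure lborel T + ennreal (L / 2)"
      using L by (simp flip: ennreal_plus)
    then have "ennreal (L/2) + ennreal (L/2) \<le> ennreal (L / 2) + emeasure lborel T"
      by (simp add: add.commute)
    then show ?thesis by (simp add: ennreal_add_left_cancel_le)
  qed
  have "ennreal (c0 * r ^ KK) * ennreal (L / 2) \<le> ennreal (c0 * r ^ KK) * emeasure lborel T"
    using mT by (intro mult_left_mono) auto
  also have "\<dots> = (\<integral>\<^sup>+ x. ennreal (c0 * r ^ KK) * indicator T x \<partial>lborel)"
    using Tm by (simp add: nn_integral_cmult_indicator)
  also have "\<dots> \<le> (\<integral>\<^sup>+ x. indicator {0<..<1} x * ennreal (\<rho> x) * indicator {a<..a+L} x \<partial>lborel)"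
  proof (intro nn_integral_mono)
    fix x show "ennreal (c0 * r ^ KK) * indicator T x \<le> indicator {0<..<1} x * ennreal (\<rho> x) * indicator {a<..a+L} x"
    proof (cases "x \<in> T")
      case True
      then have "x \<in> {0<..<1}" "x \<in> {a<..a+L}" using T01 Tsub by auto
      then show ?thesis using True pt[OF True] by (simp add: ennreal_leI)
    qed simp
  qed
  also have "\<dots> = emeasure \<nu> {a<..a+L}" by (simp add: emeasure_nu)
  finally have E0: "ennreal (c0 * r ^ KK) * ennreal (L / 2) \<le> emeasure \<nu> {a<..a+L}" .
  have "ennreal (c0 * r ^ KK * (L / 2)) = ennreal (c0 * r ^ KK) * ennreal (L / 2)"
    using c0pos r0 L by (intro ennreal_mult) auto
  with E0 have E: "ennreal (c0 * r ^ KK * (L / 2)) \<le> emeasure \<nu> {a<..a+L}" by simp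
  have fin: "emeasure \<nu> {a<..a+L} < top"
    using prob_space.emeasure_le_1[OF nu_prob, of "{a<..a+L}"] by (simp add: order_le_less_trans)
  have "c0 * r ^ KK * (L / 2) \<le> measure \<nu> {a<..a+L}"
  proof -
    have nn: "c0 * r ^ KK * (L / 2) \<ge> 0" using c0pos r0 L by simp
    have "enn2real (ennreal (c0 * r ^ KK * (L / 2))) \<le> enn2real (emeasure \<nu> {a<..a+L})"
      using E fin by (rule enn2real_mono)
    then show ?thesis using nn by (simp add: measure_def)
  qed
  also have "c0 * r ^ KK * (L / 2) = cc * L ^ (KK + 1)"
    unfolding cc_def r_def using Npos by (simp add: field_simps power_divide)
  finally show ?thesis by simp
qed

end

context cor_setting
begin

abbreviation "F \<equiv> cdf \<nu>"

lemma F_zero: assumes "y \<le> 0" shows "F y = 0"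
proof -
  have z: "(\<lambda>x. indicator {0<..<1} x * ennreal (\<rho> x) * indicator {..y} x) = (\<lambda>x. 0::ennreal)"
    using assms by (auto simp: indicator_def fun_eq_iff)
  have "emeasure \<nu> {..y} = (\<integral>\<^sup>+ x. 0 \<partial>lborel)"
    using emeasure_nu[of "{..y}"] by (simp only: z) simp
  then show ?thesis by (simp add: cdf_def measure_def)
qed

lemma F_one: assumes "y \<ge> 1" shows "F y = 1"
proof -
  have "emeasure \<nu> {..y} = emeasure \<nu> UNIV"
  proof -
    have z: "(\<lambda>x. indicator {0<..<1} x * ennreal (\<rho> x) * indicator {..y} x) = (\<lambda>x. indicator {0<..<1} x * ennreal (\<rho> x) * indicator UNIV x::ennreal)"
      using assms by (auto simp: indicator_def fun_eq_iff)
    show ?thesis using emeasure_nu[of "{..y}"] emeasure_nu[of UNIV] by (simp only: z) simp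
  qed
  also have "\<dots> = 1" using nu_prob prob_space.emeasure_space_1 by fastforce
  finally show ?thesis by (simp add: cdf_def measure_def)
qed

lemma F_diff: assumes "a < b" shows "F b = F a + measure \<nu> {a<..b}"
  using finite_borel_measure.cdf_diff_eq[OF real_distribution.finite_borel_measure_M[OF nu_real_distr] assms] by simp

lemma F_mono: "a \<le> b \<Longrightarrow> F a \<le> F b"
  using finite_borel_measure.cdf_nondecreasing[OF real_distribution.finite_borel_measure_M[OF nu_real_distr]] by blast

lemma det:
  fixes \<mu> :: "real measure" and m :: nat and h \<epsilon> :: real
  assumes mu: "real_distribution \<mu>"
    and low: "\<And>y. y < 0 \<Longrightarrow> cdf \<mu> y = 0"
    and up: "\<And>y. y \<ge> 1 \<Longrightarrow> cdf \<mu> y = 1"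
    and grid: "\<And>j. j \<le> m \<Longrightarrow> \<bar>cdf \<mu> (real j / real m) - F (real j / real m)\<bar> < \<epsilon>"
    and m: "m > 0" and mh: "1 / real m \<le> h / 2" and h: "h > 0"
    and eps: "\<epsilon> \<le> cc * (h / 2) ^ (KK + 1)"
  shows "cdf \<mu> y \<le> F (y + h)" and "F y \<le> cdf \<mu> (y + h)"
proof -
  have mpos: "real m > 0" using m by simp
  have Fnmono: "a \<le> b \<Longrightarrow> cdf \<mu> a \<le> cdf \<mu> b" for a b
    using finite_borel_measure.cdf_nondecreasing[OF real_distribution.finite_borel_measure_M[OF mu]] by blast
  have Fnle1: "cdf \<mu> a \<le> 1" for a using real_distribution.cdf_bounded_prob[OF mu] by blast
  have Fle1: "F a \<le> 1" for a using real_distribution.cdf_bounded_prob[OF nu_real_distr] by blast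
  have Fnn: "F a \<ge> 0" for a using finite_borel_measure.cdf_nonneg[OF real_distribution.finite_borel_measure_M[OF nu_real_distr]] by blast
  have Fnnn: "cdf \<mu> a \<ge> 0" for a using finite_borel_measure.cdf_nonneg[OF real_distribution.finite_borel_measure_M[OF mu]] by blast
  show "cdf \<mu> y \<le> F (y + h)"
  proof (cases "y < 0")
    case True then show ?thesis using low Fnn by simp
  next
    case y0: False
    show ?thesis
    proof (cases "y + h \<ge> 1")
      case True then show ?thesis using F_one Fnle1 by simp
    next
      case False
      define j where "j = nat \<lceil>y * real m\<rceil>"
      define z where "z = real j / real m"
      have ym0: "y * real m \<ge> 0" using y0 mpos by simp
      have jq: "real j = real_of_int \<lceil>y * real m\<rceil>" unfolding j_def using ym0 by simp
      have yj: "y * real m \<le> real j" unfolding jq by simp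
      have jy: "real j < y * real m + 1" unfolding jq using ceiling_correct[of "y * real m"] by linarith
      have zy: "y \<le> z" unfolding z_def using yj mpos by (simp add: field_simps)
      have zy2: "z \<le> y + h / 2"
      proof -
        have "z < y + 1 / real m" unfolding z_def using jy mpos by (simp add: field_simps)
        then show ?thesis using mh by linarith
      qed
      have jm: "j \<le> m"
      proof -
        have "y * real m < real m" using False h mpos by (simp add: mult_less_cancel_right1) 
        then have "real j < real m + 1" using jy by linarith
        then show ?thesis by linarith
      qed
      have z0: "0 \<le> z" using zy y0 by linarith
      have "cdf \<mu> y \<le> cdf \<mu> z" using zy Fnmono by blast
      also have "\<dots> < F z + \<epsilon>" using grid[OF jm] unfolding z_def by linarith
      also have "\<dots> \<le> F z + cc * (h / 2) ^ (KK + 1)" using eps by simp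
      also have "\<dots> \<le> F z + measure \<nu> {z<..z + h/2}"
        using mass[of z "h/2"] z0 h zy2 False by simp
      also have "\<dots> = F (z + h / 2)" using F_diff[of z "z + h/2"] h by simp
      also have "\<dots> \<le> F (y + h)" using zy2 F_mono by simp
      finally show ?thesis by simp
    qed
  qed
  show "F y \<le> cdf \<mu> (y + h)"
  proof (cases "y < 0")
    case True then show ?thesis using F_zero Fnnn by simp
  next
    case y0: False
    show ?thesis
    proof (cases "y + h \<ge> 1")
      case True then show ?thesis using up Fle1 by simp
    next
      case False
      define j where "j = nat \<lfloor>(y + h) * real m\<rfloor>"
      define z where "z = real j / real m"
      have yh0: "(y + h) * real m \<ge> 0" using y0 h mpos by simp
      have jq: "real j = real_of_int \<lfloor>(y + h) * real m\<rfloor>" unfolding j_def using yh0 by simp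
      have yj: "real j \<le> (y + h) * real m" unfolding jq by simp
      have jy: "(y + h) * real m < real j + 1" unfolding jq using floor_correct[of "(y + h) * real m"] by linarith
      have zy: "z \<le> y + h" unfolding z_def using yj mpos by (simp add: field_simps)
      have zy2: "y + h / 2 \<le> z"
      proof -
        have a: "((y + h) * real m - 1) / real m < real j / real m"
          by (rule divide_strict_right_mono) (use jy mpos in auto)
        have b: "y + h - 1 / real m = ((y + h) * real m - 1) / real m" using mpos by (simp add: field_simps)
        have "y + h - 1 / real m < z" unfolding z_def using a b by simp
        then show ?thesis using mh by linarith
      qed
      have jm: "j \<le> m"
      proof -
        have "(y + h) * real m < real m" using False mpos by (simp add: mult_less_cancel_right1)
        then show ?thesis using yj by linarith
      qed
      have "F y + cc * (h / 2) ^ (KK + 1) \<le> F y + measure \<nu> {y<..y + h/2}"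
        using mass[of y "h/2"] y0 h False by simp
      also have "\<dots> = F (y + h / 2)" using F_diff[of y "y + h/2"] h by simp
      also have "\<dots> \<le> F z" using zy2 F_mono by simp
      also have "\<dots> < cdf \<mu> z + \<epsilon>" using grid[OF jm] unfolding z_def by linarith
      also have "\<dots> \<le> cdf \<mu> (y + h) + \<epsilon>" using zy Fnmono by simp
      finally show ?thesis using eps by simp
    qed
  qed
qed

end

locale cor_full = cor_setting +
  fixes M :: "'a measure" and X :: "nat \<Rightarrow> 'a \<Rightarrow> real"
  assumes M_prob: "prob_space M"
    and X_rv: "\<And>i. X i \<in> borel_measurable M"
    and X_indep: "prob_space.indep_vars M (\<lambda>_. borel) X UNIV"
    and X_distr: "\<And>i. distr M borel (X i) = dens_measure \<rho>"
begin

interpretation P: prob_space M by (rule M_prob)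

lemma emp_real_distr: assumes "n \<ge> 1" shows "real_distribution (empirical X n w)"
  unfolding empirical_def by (rule prob_space.real_distribution_distr) (auto simp: measure_pmf.prob_space_axioms)

lemma emp_cdf: assumes "n \<ge> 1"
  shows "cdf (empirical X n w) y = (\<Sum>i\<in>{1..n}. indicator {..y} (X i w)) / real n"
proof -
  have ne: "{1..n} \<noteq> {}" using assms by simp
  have "cdf (empirical X n w) y = measure (measure_pmf (pmf_of_set {1..n})) ((\<lambda>i. X i w) -` {..y})"
    unfolding empirical_def cdf_def by (subst measure_distr) auto
  also have "\<dots> = card ({1..n} \<inter> ((\<lambda>i. X i w) -` {..y})) / card {1..n}"
    using ne by (subst measure_pmf_of_set) auto
  also have "real (card ({1..n} \<inter> ((\<lambda>i. X i w) -` {..y}))) = (\<Sum>i\<in>{1..n}. indicator ((\<lambda>i. X i w) -` {..y}) i :: real)"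
  proof -
    have "real (card ({1..n} \<inter> ((\<lambda>i. X i w) -` {..y}))) = real (\<Sum>i\<in>{1..n}. indicator ((\<lambda>i. X i w) -` {..y}) i)"
      using sum_indicator_eq_card[of "{1..n}" "(\<lambda>i. X i w) -` {..y}"] by simp
    also have "\<dots> = (\<Sum>i\<in>{1..n}. real (indicator ((\<lambda>i. X i w) -` {..y}) i))" by (rule of_nat_sum)
    also have "\<dots> = (\<Sum>i\<in>{1..n}. indicator ((\<lambda>i. X i w) -` {..y}) i :: real)"
      by (intro sum.cong) (auto simp: indicator_def)
    finally show ?thesis .
  qed
  also have "\<dots> = (\<Sum>i\<in>{1..n}. indicator {..y} (X i w))"
    by (auto simp: indicator_def intro!: sum.cong)
  finally show ?thesis by simp
qed

lemma null_out: "measure M {w \<in> space M. X i w \<notin> {0<..<1}} = 0"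
proof -
  have "measure M {w \<in> space M. X i w \<notin> {0<..<1}} = measure M (X i -` (- {0<..<1}) \<inter> space M)"
    by (intro arg_cong[where f="measure M"]) auto
  also have "\<dots> = measure (distr M borel (X i)) (- {0<..<1})"
    using X_rv by (subst measure_distr) auto
  also have "\<dots> = measure \<nu> (- {0<..<1})" using X_distr by simp
  also have "\<dots> = 0"
  proof -
    have z: "(\<lambda>x. indicator {0<..<1} x * ennreal (\<rho> x) * indicator (- {0<..<1}) x) = (\<lambda>x. 0::ennreal)"
      by (auto simp: indicator_def fun_eq_iff)
    have "emeasure \<nu> (- {0<..<1}) = (\<integral>\<^sup>+ x. 0 \<partial>lborel)"
      using emeasure_nu[of "- {0<..<1}"] by (simp only: z) simp
    then show ?thesis by (simp add: measure_def)
  qed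
  finally show ?thesis .
qed

lemma hoeff:
  assumes n: "n \<ge> 1" and e: "\<epsilon> \<ge> 0"
  shows "measure M {w \<in> space M. \<bar>(\<Sum>i\<in>{1..n}. indicator {..z} (X i w)) / real n - F z\<bar> \<ge> \<epsilon>}
           \<le> 2 * exp (- 2 * real n * \<epsilon>\<^sup>2)"
proof -
  define Z where "Z = (\<lambda>i w. indicator {..z} (X i w) :: real)"
  have ind: "P.indep_vars (\<lambda>_. borel) Z {1..n}"
    unfolding Z_def
    by (rule P.indep_vars_compose2[OF P.indep_vars_subset[OF X_indep]]) auto
  have dZ: "distr M borel (Z i) = distr M borel (Z 1)" for i
  proof -
    have "distr M borel (Z i) = distr (distr M borel (X i)) borel (indicator {..z})"
      unfolding Z_def using X_rv by (subst distr_distr) (auto simp: comp_def)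
    also have "\<dots> = distr (distr M borel (X 1)) borel (indicator {..z})" using X_distr by simp
    also have "\<dots> = distr M borel (Z 1)"
      unfolding Z_def using X_rv by (subst distr_distr) (auto simp: comp_def)
    finally show ?thesis .
  qed
  interpret H: Hoeffding_ineq_iid M "{1..n}" Z "Z 1" 0 1 "P.expectation (Z 1)"
  proof unfold_locales
    show "finite {1..n}" by simp
    show "P.indep_vars (\<lambda>_. borel) Z {1..n}" by (rule ind)
    show "distr M borel (Z i) = distr M borel (Z 1)" for i by (rule dZ)
    show "Z 1 \<in> borel_measurable M" unfolding Z_def using X_rv by measurable
    show "AE x in M. Z 1 x \<in> {0..1}" unfolding Z_def by (auto simp: indicator_def)
  qed simp
  have EZ: "P.expectation (Z 1) = F z"
  proof -
    have "P.expectation (Z 1) = integral\<^sup>L (distr M borel (X 1)) (indicator {..z})"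
      unfolding Z_def using X_rv by (subst integral_distr) auto
    also have "\<dots> = integral\<^sup>L \<nu> (indicator {..z})" using X_distr by simp
    also have "\<dots> = measure \<nu> {..z}"
        by simp
    finally show ?thesis by (simp add: cdf_def)
  qed
  have ne: "{1..n} \<noteq> {}" using n by simp
  have cn: "card {1..n} = n" by simp
  have hh: "measure M {w \<in> space M. \<bar>(\<Sum>i\<in>{1..n}. Z i w) / real (card {1..n}) - P.expectation (Z 1)\<bar> \<ge> \<epsilon>}
          \<le> 2 * exp (- 2 * real (card {1..n}) * \<epsilon>\<^sup>2 / (1 - 0)\<^sup>2)"
    by (rule H.Hoeffding_ineq_abs_ge'[OF e zero_less_one ne])
  have "(1::real) - 0 = 1" by simp
  from hh show ?thesis unfolding cn EZ diff_zero power_one div_by_1 unfolding Z_def .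
qed

end

context cor_full
begin

interpretation P: prob_space M by (rule M_prob)

definition "CC = 2 * max 1 (1 / cc)"

lemma CCpos: "CC > 0" unfolding CC_def by simp

lemma eps_ok:
  assumes x: "0 < x"
  shows "sqrt x \<le> cc * (CC * x powr (1 / (2 * (real KK + 1))) / 2) ^ (KK + 1)"
proof -
  have "(CC * x powr (1 / (2 * (real KK + 1))) / 2) ^ (KK + 1)
        = (max 1 (1 / cc)) ^ (KK + 1) * (x powr (1 / (2 * (real KK + 1)))) ^ (KK + 1)"
    unfolding CC_def by (simp add: power_mult_distrib)
  also have "(x powr (1 / (2 * (real KK + 1)))) ^ (KK + 1) = x powr (1/2)"
  proof -
    have e: "real (KK + 1) * (1 / (2 * (real KK + 1))) = 1 / 2" by (simp add: field_simps)
    show ?thesis using x by (subst powr_power) (auto simp only: e)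
  qed
  also have "x powr (1/2) = sqrt x" using x by (simp add: powr_half_sqrt)
  finally have eq: "(CC * x powr (1 / (2 * (real KK + 1))) / 2) ^ (KK + 1) = (max 1 (1 / cc)) ^ (KK + 1) * sqrt x" .
  have "1 / cc \<le> max 1 (1 / cc)" by simp
  also have "\<dots> \<le> (max 1 (1 / cc)) ^ (KK + 1)" using power_increasing[of 1 "KK+1" "max 1 (1/cc)"] by simp
  finally have "1 / cc \<le> (max 1 (1 / cc)) ^ (KK + 1)" .
  then have "cc * (1 / cc) * sqrt x \<le> cc * (max 1 (1 / cc)) ^ (KK + 1) * sqrt x"
    using ccpos x by (intro mult_right_mono mult_left_mono) auto
  then show ?thesis using ccpos eq by simp
qed

lemma main_n:
  assumes n3: "n \<ge> 3"
  shows "\<exists>E\<in>sets M. measure M E \<le> (4 / CC + 4) / ln (real n) \<and>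
     (\<forall>w\<in>space M - E. W_inf \<nu> (empirical X n w) \<le> ereal (CC * (ln (real n) / real n) powr (1 / (2 * (real KK + 1)))))"
proof -
  have npos: "real n > 0" using n3 by simp
  have n1: "n \<ge> 1" using n3 by simp
  have lnn1: "ln (real n) \<ge> 1"
  proof -
    have "exp 1 \<le> real n" using exp_le n3 by linarith
    then show ?thesis using npos by (simp add: ln_ge_iff)
  qed
  have lnn: "ln (real n) \<le> real n" using npos by (rule ln_bound)
  define x where "x = ln (real n) / real n"
  define a where "a = 1 / (2 * (real KK + 1))"
  define t where "t = x powr a"
  define h where "h = CC * t"
  define \<epsilon> where "\<epsilon> = sqrt x"
  define m where "m = nat \<lceil>2 / h\<rceil>"
  have x0: "x > 0" unfolding x_def using lnn1 npos n3 by (intro divide_pos_pos) auto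
  have x1: "x \<le> 1" unfolding x_def using lnn npos by simp
  have xn: "1 / real n \<le> x" unfolding x_def using lnn1 npos by (simp add: divide_right_mono)
  have a0: "0 \<le> a" "a \<le> 1" unfolding a_def by (auto simp: field_simps)
  have tx: "x \<le> t"
  proof -
    have "x powr 1 \<le> x powr a" using powr_mono'[OF a0(2), of x] x0 x1 by simp
    then show ?thesis unfolding t_def using x0 by simp
  qed
  have t0: "t > 0" unfolding t_def using x0 by simp
  have h0: "h > 0" unfolding h_def using t0 CCpos by simp
  have m1: "2 / h \<le> real m" unfolding m_def by linarith
  have m2: "real m < 2 / h + 1"
  proof -
    have "0 \<le> 2 / h" using h0 by simp
    then have "real m = real_of_int \<lceil>2 / h\<rceil>" unfolding m_def by simp
    then show ?thesis using ceiling_correct[of "2 / h"] by linarith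
  qed
  have mpos: "m > 0" using m1 h0
    by (metis divide_pos_pos of_nat_0_less_iff order_less_le_trans zero_less_numeral)
  have mh: "1 / real m \<le> h / 2"
  proof -
    have "2 / h > 0" using h0 by simp
    have rm: "real m > 0" using mpos by simp
    have "1 / real m \<le> 1 / (2 / h)" using m1 \<open>2 / h > 0\<close> rm by (intro divide_left_mono) auto
    then show ?thesis by simp
  qed
  have eps: "\<epsilon> \<le> cc * (h / 2) ^ (KK + 1)"
    unfolding \<epsilon>_def h_def t_def a_def using eps_ok[OF x0] .
  have eps0: "\<epsilon> \<ge> 0" unfolding \<epsilon>_def using x0 by simp
  define S where "S = (\<lambda>z w. (\<Sum>i\<in>{1..n}. indicator {..z} (X i w)) / real n :: real)"
  define E1 where "E1 = (\<Union>j\<in>{0..m}. {w\<in>space M. \<epsilon> \<le> \<bar>S (real j / real m) w - F (real j / real m)\<bar>})"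
  define E2 where "E2 = (\<Union>i\<in>{1..n}. {w\<in>space M. X i w \<notin> {0<..<1}})"
  define E where "E = E1 \<union> E2"
  have [measurable]: "X i \<in> borel_measurable M" for i by (rule X_rv)
  have E1m: "E1 \<in> sets M" unfolding E1_def S_def by measurable
  have E2m: "E2 \<in> sets M" unfolding E2_def by measurable
  have Em: "E \<in> sets M" unfolding E_def using E1m E2m by simp
  have mE1: "measure M E1 \<le> real (m + 1) * (2 * exp (- 2 * real n * \<epsilon>\<^sup>2))"
  proof -
    have "measure M E1 \<le> (\<Sum>j\<in>{0..m}. measure M {w\<in>space M. \<epsilon> \<le> \<bar>S (real j / real m) w - F (real j / real m)\<bar>})"
      unfolding E1_def by (rule P.finite_measure_subadditive_finite) (auto simp: S_def)
    also have "\<dots> \<le> (\<Sum>j\<in>{0..m}. 2 * exp (- 2 * real n * \<epsilon>\<^sup>2))"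
      by (intro sum_mono) (unfold S_def, rule hoeff[OF n1 eps0])
    also have "\<dots> = real (m + 1) * (2 * exp (- 2 * real n * \<epsilon>\<^sup>2))" by simp
    finally show ?thesis .
  qed
  have mE2: "measure M E2 \<le> 0"
  proof -
    have "measure M E2 \<le> (\<Sum>i\<in>{1..n}. measure M {w\<in>space M. X i w \<notin> {0<..<1}})"
      unfolding E2_def by (rule P.finite_measure_subadditive_finite) auto
    also have "\<dots> = 0" using null_out by simp
    finally show ?thesis .
  qed
  have ex: "exp (- 2 * real n * \<epsilon>\<^sup>2) = 1 / (real n)\<^sup>2"
  proof -
    have "real n * \<epsilon>\<^sup>2 = ln (real n)" unfolding \<epsilon>_def x_def using x0 npos x_def by simp
    then have "- 2 * real n * \<epsilon>\<^sup>2 = - (ln (real n) + ln (real n))" by simp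
    then have e1: "exp (- 2 * real n * \<epsilon>\<^sup>2) = inverse (exp (ln (real n) + ln (real n)))"
      by (simp add: exp_minus)
    have e2: "exp (ln (real n) + ln (real n)) = real n * real n"
      by (simp only: exp_add exp_ln[OF npos])
    have e3: "inverse (real n * real n) = 1 / (real n)\<^sup>2" by (simp add: power2_eq_square inverse_eq_divide)
    show ?thesis unfolding e1 e2 e3 ..
  qed
  have hinv: "2 / h \<le> 2 * real n / CC"
  proof -
    have "1 / real n \<le> t" using xn tx by linarith
    then have "CC * (1 / real n) \<le> h" unfolding h_def using CCpos by (intro mult_left_mono) auto
    then have "2 / h \<le> 2 / (CC * (1 / real n))" using CCpos npos h0
      by (intro divide_left_mono) auto
    then show ?thesis by simp
  qed
  have mE: "measure M E \<le> (4 / CC + 4) / ln (real n)"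
  proof -
    have "measure M E \<le> measure M E1 + measure M E2" unfolding E_def
      using E1m E2m by (rule measure_Un_le)
    also have "\<dots> \<le> real (m + 1) * (2 / (real n)\<^sup>2)" using mE1 mE2 ex by simp
    also have "\<dots> \<le> (2 * real n / CC + 2) * (2 / (real n)\<^sup>2)"
      using m2 hinv npos by (intro mult_right_mono) auto
    also have "\<dots> = (4 / CC) / real n + 4 / (real n)\<^sup>2" using npos CCpos
      by (simp add: field_simps power2_eq_square)
    also have "\<dots> \<le> (4 / CC) / real n + 4 / real n"
    proof -
      have "real n \<le> (real n)\<^sup>2" using n1 by (simp add: power2_eq_square)
      then have "4 / (real n)\<^sup>2 \<le> 4 / real n" using npos by (intro divide_left_mono) auto
      then show ?thesis by simp
    qed
    also have "\<dots> = (4 / CC + 4) / real n" by (simp add: add_divide_distrib)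
    also have "\<dots> \<le> (4 / CC + 4) / ln (real n)"
    proof -
      have "0 < real n * ln (real n)" using npos lnn1 n3 by (intro mult_pos_pos) auto
      then show ?thesis using lnn CCpos by (intro divide_left_mono) auto
    qed
    finally show ?thesis .
  qed
  have good: "W_inf \<nu> (empirical X n w) \<le> ereal h" if w: "w \<in> space M - E" for w
  proof -
    define \<mu> where "\<mu> = empirical X n w"
    have mu: "real_distribution \<mu>" unfolding \<mu>_def by (rule emp_real_distr[OF n1])
    have cS: "cdf \<mu> z = S z w" for z unfolding \<mu>_def S_def by (rule emp_cdf[OF n1])
    have inside: "X i w \<in> {0<..<1}" if "i \<in> {1..n}" for i
      using w that unfolding E_def E2_def by auto
    have grid: "\<bar>cdf \<mu> (real j / real m) - F (real j / real m)\<bar> < \<epsilon>" if "j \<le> m" for j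
      using w that unfolding E_def E1_def cS by fastforce
    have low: "cdf \<mu> y = 0" if "y < 0" for y
    proof -
      have "(\<Sum>i\<in>{1..n}. indicator {..y} (X i w) :: real) = (\<Sum>i\<in>{1..n}. 0)"
        using inside that by (intro sum.cong) (auto simp: indicator_def, fastforce)
      then show ?thesis unfolding cS S_def by simp
    qed
    have up: "cdf \<mu> y = 1" if "y \<ge> 1" for y
    proof -
      have "(\<Sum>i\<in>{1..n}. indicator {..y} (X i w) :: real) = (\<Sum>i\<in>{1..n}. 1)"
        using inside that by (intro sum.cong) (auto simp: indicator_def, fastforce)
      then show ?thesis unfolding cS S_def using npos by simp
    qed
    have d1: "cdf \<mu> y \<le> F (y + h)" for y by (rule det(1)[OF mu low up grid mpos mh h0 eps])
    have d2: "F y \<le> cdf \<mu> (y + h)" for y by (rule det(2)[OF mu low up grid mpos mh h0 eps])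
    show ?thesis unfolding \<mu>_def[symmetric]
      by (rule W_inf_cdf_bound[OF nu_real_distr mu d2 d1])
  qed
  show ?thesis
    using Em mE good unfolding h_def t_def x_def a_def by (intro bexI[of _ E]) auto
qed

end

theorem corollary1p3:
  fixes \<rho> :: "real \<Rightarrow> real" and N :: nat
    and xs \<Delta> Cl Cu :: "nat \<Rightarrow> real" and k :: "nat \<Rightarrow> int"
    and lam :: real
    and M :: "'a measure" and X :: "nat \<Rightarrow> 'a \<Rightarrow> real"
  assumes rho_meas: "\<rho> \<in> borel_measurable borel"
    and rho_nonneg: "\<And>x. x \<in> {0<..<1} \<Longrightarrow> \<rho> x \<ge> 0"
    and rho_prob: "(\<integral>\<^sup>+ x \<in> {0<..<1}. ennreal (\<rho> x) \<partial>lborel) = 1"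
    and N_pos: "N \<ge> 1"
    and xs_dist: "inj_on xs {..<N}"
    and zeros: "{x \<in> {0<..<1}. \<rho> x = 0} = xs ` {..<N}"
    and params: "\<And>i. i < N \<Longrightarrow> \<Delta> i > 0 \<and> k i > 0 \<and> Cl i > 0 \<and> Cu i > 0"
    and local_bounds: "\<And>i x. i < N \<Longrightarrow> x \<in> {0<..<1} \<Longrightarrow> x \<in> {xs i - \<Delta> i <..< xs i + \<Delta> i} \<Longrightarrow>
          Cl i * \<bar>xs i - x\<bar> powi k i \<le> \<rho> x \<and> \<rho> x \<le> Cu i * \<bar>xs i - x\<bar> powi k i"
    and lower_away: "lam > 0"
    and lower_bound: "\<And>x. x \<in> {0<..<1} \<Longrightarrow> (\<forall>i<N. x \<notin> {xs i - \<Delta> i <..< xs i + \<Delta> i}) \<Longrightarrow> \<rho> x \<ge> lam"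
    and M_prob: "prob_space M"
    and X_rv: "\<And>i. X i \<in> borel_measurable M"
    and X_indep: "prob_space.indep_vars M (\<lambda>_. borel) X UNIV"
    and X_distr: "\<And>i. distr M borel (X i) = dens_measure \<rho>"
  shows "\<exists>C>0. \<exists>K. \<exists>n0::nat. \<forall>n\<ge>n0. \<exists>E \<in> sets M.
           measure M E \<le> K / ln (real n) \<and>
           (\<forall>w \<in> space M - E. W_inf (dens_measure \<rho>) (empirical X n w)
              \<le> ereal (C * (MAX i\<in>{..<N}. (ln (real n) / real n) powr (1 / (2 * (real_of_int (k i) + 1))))))"
proof -
  have cs: "cor_setting \<rho> N xs \<Delta> Cl Cu k lam"
    by unfold_locales (rule assms; assumption?)+
  interpret cor_full \<rho> N xs \<Delta> Cl Cu k lam M X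
    by (intro cor_full.intro cs cor_full_axioms.intro) (rule assms)+
  obtain i0 where i0: "i0 < N" "nat (k i0) = KK" using KK_attained by blast
  have ki0: "real_of_int (k i0) = real KK" using i0 params[OF i0(1)] by auto
  have "\<forall>n\<ge>3. \<exists>E \<in> sets M.
           measure M E \<le> (4 / CC + 4) / ln (real n) \<and>
           (\<forall>w \<in> space M - E. W_inf (dens_measure \<rho>) (empirical X n w)
              \<le> ereal (CC * (MAX i\<in>{..<N}. (ln (real n) / real n) powr (1 / (2 * (real_of_int (k i) + 1))))))"
  proof (intro allI impI)
    fix n :: nat assume n3: "n \<ge> 3"
    obtain E where E: "E \<in> sets M" "measure M E \<le> (4 / CC + 4) / ln (real n)"
      "\<And>w. w \<in> space M - E \<Longrightarrow> W_inf \<nu> (empirical X n w) \<le> ereal (CC * (ln (real n) / real n) powr (1 / (2 * (real KK + 1))))"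
      using main_n[OF n3] by blast
    have "(ln (real n) / real n) powr (1 / (2 * (real KK + 1)))
          \<le> (MAX i\<in>{..<N}. (ln (real n) / real n) powr (1 / (2 * (real_of_int (k i) + 1))))"
    proof -
      have "(ln (real n) / real n) powr (1 / (2 * (real KK + 1))) = (ln (real n) / real n) powr (1 / (2 * (real_of_int (k i0) + 1)))"
        by (simp only: ki0)
      also have "\<dots> \<le> (MAX i\<in>{..<N}. (ln (real n) / real n) powr (1 / (2 * (real_of_int (k i) + 1))))"
        by (rule Max_ge) (use i0(1) in auto)
      finally show ?thesis .
    qed
    then have le: "ereal (CC * (ln (real n) / real n) powr (1 / (2 * (real KK + 1))))
          \<le> ereal (CC * (MAX i\<in>{..<N}. (ln (real n) / real n) powr (1 / (2 * (real_of_int (k i) + 1)))))"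
      using CCpos by simp
    show "\<exists>E \<in> sets M.
           measure M E \<le> (4 / CC + 4) / ln (real n) \<and>
           (\<forall>w \<in> space M - E. W_inf (dens_measure \<rho>) (empirical X n w)
              \<le> ereal (CC * (MAX i\<in>{..<N}. (ln (real n) / real n) powr (1 / (2 * (real_of_int (k i) + 1))))))"
    proof (intro bexI[of _ E] conjI ballI)
      fix w assume w: "w \<in> space M - E"
      show "W_inf (dens_measure \<rho>) (empirical X n w)
              \<le> ereal (CC * (MAX i\<in>{..<N}. (ln (real n) / real n) powr (1 / (2 * (real_of_int (k i) + 1)))))"
        using E(3)[OF w] le by (rule order_trans)
    qed (use E in auto)
  qed
  then show ?thesis using CCpos by blast
qed


end
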